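(* For every state $x$ and every round $k\ge 0$, \[ \mathbb{E}\big[\Psi_0(X^k)-\Psi_0(X^{k+1}) \,\big|\, X^k=x\big] \;\ge\; \sum_{\{i,j\}\in E} \frac{\left(1-\frac{2}{\alpha}\right)(\ell_i(x)-\ell_j(x))^2}{\alpha\, d_{ij}\left(\frac{1}{s_i}+\frac{1}{s_j}\right)} \;-\; \frac{n}{\alpha}. \]
   Context: $G=(V,E)$ is an undirected graph on $n$ vertices (processors); $\deg(i)$ is the degree and $d_{ij}=\max\{\deg(i),\deg(j)\}$. Processor $i$ has speed $s_i>0$, scaled so the smallest speed is $1$; $s_{\max}=\max_i s_i$, $\mathcal{S}=\sum_i s_i$. There are $m$ unit tasks; in state $x$, $w_i(x)$ is the number of tasks on $i$ and $\ell_i(x)=w_i(x)/s_i$. $\Psi_0(x)=\sum_i (w_i(x)-m s_i/\mathcal{S})^2/s_i$. Protocol with $\alpha=4s_{\max}$: in each round every task, independently, with $i$ its current processor, chooses a uniformly random neighbor $j$; if $\ell_i-\ell_j>1/s_j$ it moves to $j$ with probability $\frac{\deg(i)}{d_{ij}}\cdot\frac{\ell_i-\ell_j}{\alpha(1/s_i+1/s_j)w_i}$, otherwise stays. $X^k$ denotes the state after $k$ rounds. The sum is over undirected edges, each counted once. *)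

theory Defs
  imports "HOL-Probability.Probability"
begin

text \<open>Graph: vertex set V (finite), symmetric irreflexive edge relation E on V.
  A state is an assignment of the m unit tasks (indexed 0..<m) to processors.\<close>

definition nbrs :: "'v set \<Rightarrow> ('v \<Rightarrow> 'v \<Rightarrow> bool) \<Rightarrow> 'v \<Rightarrow> 'v set" where
  "nbrs V E i = {j \<in> V. E i j}"

definition deg :: "'v set \<Rightarrow> ('v \<Rightarrow> 'v \<Rightarrow> bool) \<Rightarrow> 'v \<Rightarrow> nat" where
  "deg V E i = card (nbrs V E i)"

definition dmax :: "'v set \<Rightarrow> ('v \<Rightarrow> 'v \<Rightarrow> bool) \<Rightarrow> 'v \<Rightarrow> 'v \<Rightarrow> nat" where
  "dmax V E i j = max (deg V E i) (deg V E j)"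

definition smax :: "'v set \<Rightarrow> ('v \<Rightarrow> real) \<Rightarrow> real" where
  "smax V s = Max (s ` V)"

definition alpha :: "'v set \<Rightarrow> ('v \<Rightarrow> real) \<Rightarrow> real" where
  "alpha V s = 4 * smax V s"

definition Ssum :: "'v set \<Rightarrow> ('v \<Rightarrow> real) \<Rightarrow> real" where
  "Ssum V s = (\<Sum>i\<in>V. s i)"

definition wload :: "nat \<Rightarrow> (nat \<Rightarrow> 'v) \<Rightarrow> 'v \<Rightarrow> nat" where
  "wload m x i = card {t. t < m \<and> x t = i}"

definition lload :: "('v \<Rightarrow> real) \<Rightarrow> nat \<Rightarrow> (nat \<Rightarrow> 'v) \<Rightarrow> 'v \<Rightarrow> real" where
  "lload s m x i = real (wload m x i) / s i"

definition Psi0 :: "'v set \<Rightarrow> ('v \<Rightarrow> real) \<Rightarrow> nat \<Rightarrow> (nat \<Rightarrow> 'v) \<Rightarrow> real" where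
  "Psi0 V s m x = (\<Sum>i\<in>V. (real (wload m x i) - real m * s i / Ssum V s)\<^sup>2 / s i)"

text \<open>Probability that a task on i, having chosen neighbour j, moves to j (when l_i - l_j > 1/s_j).\<close>
definition move_prob :: "'v set \<Rightarrow> ('v \<Rightarrow> 'v \<Rightarrow> bool) \<Rightarrow> ('v \<Rightarrow> real) \<Rightarrow> nat \<Rightarrow> (nat \<Rightarrow> 'v)
    \<Rightarrow> 'v \<Rightarrow> 'v \<Rightarrow> real" where
  "move_prob V E s m x i j =
     real (deg V E i) / real (dmax V E i j) *
     ((lload s m x i - lload s m x j) /
      (alpha V s * (1 / s i + 1 / s j) * real (wload m x i)))"

definition task_move :: "'v set \<Rightarrow> ('v \<Rightarrow> 'v \<Rightarrow> bool) \<Rightarrow> ('v \<Rightarrow> real) \<Rightarrow> nat \<Rightarrow> (nat \<Rightarrow> 'v)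
    \<Rightarrow> 'v \<Rightarrow> 'v pmf" where
  "task_move V E s m x i =
     (if nbrs V E i = {} then return_pmf i
      else pmf_of_set (nbrs V E i) \<bind> (\<lambda>j.
        if lload s m x i - lload s m x j > 1 / s j
        then map_pmf (\<lambda>b. if b then j else i) (bernoulli_pmf (move_prob V E s m x i j))
        else return_pmf i))"

definition round_pmf :: "'v set \<Rightarrow> ('v \<Rightarrow> 'v \<Rightarrow> bool) \<Rightarrow> ('v \<Rightarrow> real) \<Rightarrow> nat \<Rightarrow> (nat \<Rightarrow> 'v)
    \<Rightarrow> (nat \<Rightarrow> 'v) pmf" where
  "round_pmf V E s m x = Pi_pmf {..<m} undefined (\<lambda>t. task_move V E s m x (x t))"

end

theory Submission
  imports Defs "HOL-Analysis.Analysis"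
begin


lemma fin_Pi_pmf:
  assumes "finite A" "\<And>t. t \<in> A \<Longrightarrow> finite (set_pmf (Q t))"
  shows "finite (set_pmf (Pi_pmf A dflt Q))"
  using assms by (simp add: set_Pi_pmf finite_PiE_dflt)

lemma exp_X:
  assumes "finite A" "\<And>t. t \<in> A \<Longrightarrow> finite (set_pmf (Q t))" "t \<in> A"
  shows "measure_pmf.expectation (Pi_pmf A dflt Q) (\<lambda>y. if y t = i then 1 else 0 :: real) = pmf (Q t) i"
proof -
  let ?f = "\<lambda>z v. if z = t then (if v = i then 1 else 0 :: real) else 1"
  have "measure_pmf.expectation (Pi_pmf A dflt Q) (\<lambda>y. \<Prod>z\<in>A. ?f z (y z)) = (\<Prod>z\<in>A. measure_pmf.expectation (Q z) (?f z))"
    by (rule expectation_prod_Pi_pmf) (auto intro: integrable_measure_pmf_finite assms)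
  moreover have "(\<lambda>y. \<Prod>z\<in>A. ?f z (y z)) = (\<lambda>y. if y t = i then 1 else 0)"
    using assms by (auto simp: prod.If_cases)
  moreover have "(\<Prod>z\<in>A. measure_pmf.expectation (Q z) (?f z)) = (\<Prod>z\<in>A. if z = t then measure_pmf.expectation (Q t) (?f t) else 1)"
    by (rule prod.cong) auto
  moreover have "\<dots> = measure_pmf.expectation (Q t) (?f t)"
    using assms by simp
  moreover have "measure_pmf.expectation (Q t) (?f t) = pmf (Q t) i"
  proof -
    have "(\<lambda>v. if v = i then 1 else 0::real) = indicator {i}" by (auto simp: indicator_def)
    then show ?thesis by (simp add: measure_pmf.emeasure_eq_measure, metis measure_pmf_single)
  qed
  ultimately show ?thesis by simp
qed

lemma exp_XX:
  assumes "finite A" "\<And>t. t \<in> A \<Longrightarrow> finite (set_pmf (Q t))" "t \<in> A" "u \<in> A" "t \<noteq> u"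
  shows "measure_pmf.expectation (Pi_pmf A dflt Q) (\<lambda>y. (if y t = i then 1 else 0 :: real) * (if y u = i then 1 else 0)) = pmf (Q t) i * pmf (Q u) i"
proof -
  let ?g = "\<lambda>v. if v = i then 1 else 0 :: real"
  let ?f = "\<lambda>z v. if z = t \<or> z = u then ?g v else 1"
  have "measure_pmf.expectation (Pi_pmf A dflt Q) (\<lambda>y. \<Prod>z\<in>A. ?f z (y z)) = (\<Prod>z\<in>A. measure_pmf.expectation (Q z) (?f z))"
    by (rule expectation_prod_Pi_pmf) (auto intro: integrable_measure_pmf_finite assms)
  moreover have "(\<lambda>y. \<Prod>z\<in>A. ?f z (y z)) = (\<lambda>y. ?g (y t) * ?g (y u))"
  proof
    fix y
    have "(\<Prod>z\<in>A. ?f z (y z)) = (\<Prod>z\<in>{t,u}. ?g (y z))"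
      using assms by (intro prod.mono_neutral_cong_right) auto
    then show "(\<Prod>z\<in>A. ?f z (y z)) = ?g (y t) * ?g (y u)" using assms by simp
  qed
  moreover have "(\<Prod>z\<in>A. measure_pmf.expectation (Q z) (?f z)) = (\<Prod>z\<in>{t,u}. measure_pmf.expectation (Q z) ?g)"
    using assms by (intro prod.mono_neutral_cong_right) auto
  moreover have "measure_pmf.expectation (Q z) ?g = pmf (Q z) i" for z
  proof -
    have "?g = indicator {i}" by (auto simp: indicator_def)
    then show ?thesis by (simp add: measure_pmf.emeasure_eq_measure, metis measure_pmf_single)
  qed
  ultimately show ?thesis using assms by simp
qed

lemma exp_count_sq:
  assumes "finite A" "\<And>t. t \<in> A \<Longrightarrow> finite (set_pmf (Q t))"
  shows "measure_pmf.expectation (Pi_pmf A dflt Q) (\<lambda>y. (real (card {t\<in>A. y t = i}) - b)\<^sup>2)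
     = ((\<Sum>t\<in>A. pmf (Q t) i) - b)\<^sup>2 + (\<Sum>t\<in>A. pmf (Q t) i * (1 - pmf (Q t) i))"
proof -
  let ?M = "measure_pmf (Pi_pmf A dflt Q)"
  let ?X = "\<lambda>t y. if y t = i then 1 else 0 :: real"
  let ?p = "\<lambda>t. pmf (Q t) i"
  have fin: "finite (set_pmf (Pi_pmf A dflt Q))" using assms by (rule fin_Pi_pmf)
  have int: "integrable ?M f" for f :: "_ \<Rightarrow> real" using fin by (rule integrable_measure_pmf_finite)
  have cnt: "real (card {t\<in>A. y t = i}) = (\<Sum>t\<in>A. ?X t y)" for y
    using assms(1) by (simp add: sum.If_cases Int_def conj_commute)
  have sq: "(real (card {t\<in>A. y t = i}) - b)\<^sup>2 = (\<Sum>t\<in>A. \<Sum>u\<in>A. ?X t y * ?X u y) - 2 * b * (\<Sum>t\<in>A. ?X t y) + b\<^sup>2" for y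
    unfolding cnt by (simp add: power2_eq_square algebra_simps sum_product)
  have e1: "measure_pmf.expectation (Pi_pmf A dflt Q) (\<lambda>y. \<Sum>t\<in>A. ?X t y) = (\<Sum>t\<in>A. ?p t)"
    by (subst Bochner_Integration.integral_sum) (auto intro: int simp: exp_X[OF assms(1,2)])
  have e2: "measure_pmf.expectation (Pi_pmf A dflt Q) (\<lambda>y. \<Sum>t\<in>A. \<Sum>u\<in>A. ?X t y * ?X u y)
        = (\<Sum>t\<in>A. \<Sum>u\<in>A. ?p t * ?p u + (if t = u then ?p t - ?p t * ?p t else 0))"
  proof -
    have "measure_pmf.expectation (Pi_pmf A dflt Q) (\<lambda>y. \<Sum>t\<in>A. \<Sum>u\<in>A. ?X t y * ?X u y)
       = (\<Sum>t\<in>A. \<Sum>u\<in>A. measure_pmf.expectation (Pi_pmf A dflt Q) (\<lambda>y. ?X t y * ?X u y))"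
      by (simp add: Bochner_Integration.integral_sum int)
    also have "\<dots> = (\<Sum>t\<in>A. \<Sum>u\<in>A. ?p t * ?p u + (if t = u then ?p t - ?p t * ?p t else 0))"
    proof (intro sum.cong refl)
      fix t u assume tu: "t \<in> A" "u \<in> A"
      show "measure_pmf.expectation (Pi_pmf A dflt Q) (\<lambda>y. ?X t y * ?X u y) = ?p t * ?p u + (if t = u then ?p t - ?p t * ?p t else 0)"
      proof (cases "t = u")
        case True
        have "(\<lambda>y. ?X t y * ?X u y) = ?X t" using True by auto
        then show ?thesis using True exp_X[OF assms tu(1)] by simp
      next
        case False
        then show ?thesis using exp_XX[OF assms tu False] by simp
      qed
    qed
    finally show ?thesis .
  qed
  have "measure_pmf.expectation (Pi_pmf A dflt Q) (\<lambda>y. (real (card {t\<in>A. y t = i}) - b)\<^sup>2)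
    = measure_pmf.expectation (Pi_pmf A dflt Q) (\<lambda>y. \<Sum>t\<in>A. \<Sum>u\<in>A. ?X t y * ?X u y)
      - 2 * b * measure_pmf.expectation (Pi_pmf A dflt Q) (\<lambda>y. \<Sum>t\<in>A. ?X t y) + b\<^sup>2"
    unfolding sq by (simp add: int)
  also have "\<dots> = (\<Sum>t\<in>A. \<Sum>u\<in>A. ?p t * ?p u + (if t = u then ?p t - ?p t * ?p t else 0)) - 2 * b * (\<Sum>t\<in>A. ?p t) + b\<^sup>2"
    using e1 e2 by simp
  also have "\<dots> = ((\<Sum>t\<in>A. ?p t) - b)\<^sup>2 + (\<Sum>t\<in>A. ?p t * (1 - ?p t))"
    using assms(1) by (simp add: sum.distrib sum_product power2_eq_square algebra_simps sum_subtractf)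
  finally show ?thesis .
qed



definition Fl where
  "Fl V E s m x i j = (if E i j \<and> lload s m x i - lload s m x j > 1 / s j
     then (lload s m x i - lload s m x j) / (alpha V s * real (dmax V E i j) * (1 / s i + 1 / s j)) else 0)"

lemma nbrs_sub: "nbrs V E k \<subseteq> V" by (auto simp: nbrs_def)

lemma tm_set:
  assumes "finite V"
  shows "set_pmf (task_move V E s m x k) \<subseteq> insert k (nbrs V E k)"
  using assms finite_subset[OF nbrs_sub[of V E k]]
  unfolding task_move_def by (auto simp: set_pmf_of_set split: if_splits)

lemma move_prob_bounds:
  assumes fin: "finite V" and Ekj: "E k j" and EV: "\<And>i j. E i j \<Longrightarrow> i \<in> V \<and> j \<in> V \<and> i \<noteq> j"
    and spos: "\<And>i. i \<in> V \<Longrightarrow> s i > 0" and al: "alpha V s \<ge> 1"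
    and act: "lload s m x k - lload s m x j > 1 / s j"
  shows "0 \<le> move_prob V E s m x k j" "move_prob V E s m x k j \<le> 1" "real (wload m x k) > 0"
    "deg V E k > 0"
proof -
  have kV: "k \<in> V" and jV: "j \<in> V" using EV[OF Ekj] by auto
  have sk: "s k > 0" and sj: "s j > 0" using spos kV jV by auto
  have lj: "lload s m x j \<ge> 0" using sj by (simp add: lload_def)
  have pos: "lload s m x k - lload s m x j > 0" using act sj by (smt (verit) divide_pos_pos)
  then have lk: "lload s m x k > 0" using lj by linarith
  then show wk: "real (wload m x k) > 0" using sk by (simp add: lload_def zero_less_divide_iff)
  have "j \<in> nbrs V E k" using Ekj jV by (simp add: nbrs_def)
  moreover have "finite (nbrs V E k)" using fin nbrs_sub finite_subset by metis
  ultimately show dk: "deg V E k > 0" unfolding deg_def using card_gt_0_iff by blast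
  have d1: "real (deg V E k) / real (dmax V E k j) \<le> 1" "real (deg V E k) / real (dmax V E k j) \<ge> 0"
    using dk by (auto simp: dmax_def)
  have c: "1 / s k + 1 / s j > 0" using sk sj by (intro add_pos_pos) auto
  have den: "alpha V s * (1 / s k + 1 / s j) * real (wload m x k) > 0" using al c wk by simp
  have q0: "(lload s m x k - lload s m x j) / (alpha V s * (1 / s k + 1 / s j) * real (wload m x k)) \<ge> 0"
    using pos den by simp
  have "lload s m x k - lload s m x j \<le> real (wload m x k) / s k" using lj by (simp add: lload_def)
  also have "\<dots> \<le> (1 / s k + 1 / s j) * real (wload m x k)" using sj wk by (simp add: field_simps)
  also have "\<dots> \<le> alpha V s * (1 / s k + 1 / s j) * real (wload m x k)"
    using al c wk by (simp add: mult_right_mono mult_le_cancel_right1)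
  finally have q1: "(lload s m x k - lload s m x j) / (alpha V s * (1 / s k + 1 / s j) * real (wload m x k)) \<le> 1"
    using den by simp
  show "0 \<le> move_prob V E s m x k j" unfolding move_prob_def by (rule mult_nonneg_nonneg[OF d1(2) q0])
  show "move_prob V E s m x k j \<le> 1" unfolding move_prob_def using d1 q0 q1 mult_le_one by blast
qed

lemma tm_pmf:
  assumes fin: "finite V" and EV: "\<And>i j. E i j \<Longrightarrow> i \<in> V \<and> j \<in> V \<and> i \<noteq> j"
    and spos: "\<And>i. i \<in> V \<Longrightarrow> s i > 0" and al: "alpha V s \<ge> 1"
    and kV: "k \<in> V" and jk: "j \<noteq> k"
  shows "real (wload m x k) * pmf (task_move V E s m x k) j = Fl V E s m x k j"
proof (cases "nbrs V E k = {}")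
  case True
  then have "\<not> E k j" using EV by (auto simp: nbrs_def)
  then show ?thesis using True jk by (simp add: task_move_def Fl_def)
next
  case False
  let ?N = "nbrs V E k"
  let ?act = "\<lambda>j. lload s m x k - lload s m x j > 1 / s j"
  let ?g = "\<lambda>j. if ?act j
        then map_pmf (\<lambda>b. if b then j else k) (bernoulli_pmf (move_prob V E s m x k j))
        else return_pmf k"
  have finN: "finite ?N" using fin nbrs_sub finite_subset by metis
  have g0: "pmf (?g j') j = 0" if "j' \<noteq> j" for j'
  proof -
    have "j \<notin> set_pmf (?g j')" using that jk by auto
    then show ?thesis by (simp add: set_pmf_eq)
  qed
  have gj: "pmf (?g j) j = (if E k j \<and> ?act j then move_prob V E s m x k j else 0)" if "j \<in> ?N"
  proof -
    have Ekj: "E k j" using that by (simp add: nbrs_def)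
    show ?thesis
    proof (cases "?act j")
      case True
      note b = move_prob_bounds[where E=E and k=k and j=j and s=s and m=m and x=x, OF fin Ekj EV spos al True]
      have inj: "inj (\<lambda>b. if b then j else k)" using jk by (auto simp: inj_def split: if_splits)
      have "pmf (map_pmf (\<lambda>b. if b then j else k) (bernoulli_pmf (move_prob V E s m x k j))) ((\<lambda>b. if b then j else k) True)
          = pmf (bernoulli_pmf (move_prob V E s m x k j)) True"
        by (rule pmf_map_inj'[OF inj])
      then show ?thesis using True Ekj b by simp
    next
      case False
      then show ?thesis using jk by simp
    qed
  qed
  have tm: "task_move V E s m x k = pmf_of_set ?N \<bind> ?g" using False by (simp add: task_move_def)
  have "pmf (task_move V E s m x k) j = (\<Sum>j'\<in>?N. pmf (?g j') j) / real (card ?N)"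
    unfolding tm pmf_bind using integral_pmf_of_set[OF False finN] by simp
  also have "(\<Sum>j'\<in>?N. pmf (?g j') j) = (if j \<in> ?N then pmf (?g j) j else 0)"
  proof -
    have "(\<Sum>j'\<in>?N. pmf (?g j') j) = (\<Sum>j'\<in>?N. if j' = j then pmf (?g j) j else 0)"
      using g0 by (intro sum.cong) auto
    then show ?thesis using finN by simp
  qed
  also have "\<dots> = (if E k j \<and> ?act j then move_prob V E s m x k j else 0)"
    using gj EV by (auto simp: nbrs_def)
  finally have p: "pmf (task_move V E s m x k) j = (if E k j \<and> ?act j then move_prob V E s m x k j else 0) / real (deg V E k)"
    by (simp add: deg_def)
  show ?thesis
  proof (cases "E k j \<and> ?act j")
    case True
    note b = move_prob_bounds[where E=E and k=k and j=j and s=s and m=m and x=x, OF fin conjunct1[OF True] EV spos al conjunct2[OF True]]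
    have dpos: "real (dmax V E k j) > 0" using b(4) by (simp add: dmax_def)
    have jV: "j \<in> V" using EV True by auto
    have c: "1 / s k + 1 / s j > 0" using spos kV jV by (intro add_pos_pos) auto
    have aux: "w * ((D / dd * (a / (al * c * w))) / D) = a / (al * dd * c)"
      if "w > 0" "D > 0" "dd > 0" "c > 0" "al > 0" for w D dd c al a :: real
      using that by (simp add: field_simps)
    have e1: "Fl V E s m x k j = (lload s m x k - lload s m x j) / (alpha V s * real (dmax V E k j) * (1 / s k + 1 / s j))"
      using True by (simp add: Fl_def)
    have e2: "pmf (task_move V E s m x k) j = move_prob V E s m x k j / real (deg V E k)"
      using p True by simp
    show ?thesis unfolding e1 e2 move_prob_def
      by (rule aux[OF b(3) _ dpos c]) (use b(4) al in auto)
  next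
    case False
    then show ?thesis unfolding p Fl_def by auto
  qed
qed



lemma pair_case1:
  fixes si sj al Dd a :: real
  assumes si: "si \<ge> 1" and sj: "sj \<ge> 1" and al: "al \<ge> 4" and D: "Dd \<ge> 1" and act: "a > 1 / sj"
  defines "c \<equiv> 1 / si + 1 / sj"
  defines "F \<equiv> a / (al * Dd * c)"
  shows "2 * a * F - Dd * F\<^sup>2 * c - F * c - (1 - 2 / al) * a\<^sup>2 / (al * Dd * c) \<ge> - 1 / (al * Dd)"
proof -
  have c0: "c > 0" unfolding c_def using si sj by (auto simp: field_simps)
  have "1 / si \<le> 1" "1 / sj \<le> 1" using si sj by auto
  then have c2: "c \<le> 2" unfolding c_def by linarith
  define K where "K = al * Dd"
  have K: "K > 0" using al D by (simp add: K_def)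
  define u where "u = a / c"
  have a: "a = u * c" using c0 by (simp add: u_def)
  have F: "F = u / K" unfolding F_def K_def a using c0 by simp
  have "2 * a * F - Dd * F\<^sup>2 * c - F * c - (1 - 2 / al) * a\<^sup>2 / (al * Dd * c)
     = (c / K) * (u\<^sup>2 * (1 + 1 / al) - u)"
    unfolding F a K_def using c0 al D by (simp add: field_simps power2_eq_square)
  also have "\<dots> \<ge> (c / K) * (u\<^sup>2 - u)"
  proof -
    have "u\<^sup>2 * (1 + 1 / al) - u \<ge> u\<^sup>2 - u" using al by (simp add: algebra_simps)
    then show ?thesis using c0 K by (intro mult_left_mono) auto
  qed
  also have "(c / K) * (u\<^sup>2 - u) \<ge> (c / K) * (- 1 / 4)"
  proof -
    have "u\<^sup>2 - u \<ge> -1/4" using sum_squares_ge_zero[of "u - 1/2" 0] by (simp add: power2_eq_square algebra_simps)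
    then show ?thesis using c0 K by (intro mult_left_mono) auto
  qed
  also have "(c / K) * (- 1 / 4) \<ge> - 1 / K" using c2 K by (simp add: field_simps)
  finally show ?thesis by (simp add: K_def)
qed

lemma pair_case3:
  fixes si sj al Dd a :: real
  assumes si: "si \<ge> 1" and sj: "sj \<ge> 1" and al: "al \<ge> 4" and D: "Dd \<ge> 1"
    and n1: "\<not> a > 1 / sj" and n2: "\<not> - a > 1 / si"
  shows "- ((1 - 2 / al) * a\<^sup>2 / (al * Dd * (1 / si + 1 / sj))) \<ge> - 1 / (al * Dd)"
proof -
  define c where "c = 1 / si + 1 / sj"
  have c0: "c > 0" unfolding c_def using si sj by (auto simp: field_simps)
  have K: "al * Dd > 0" using al D by simp
  have i1: "1 / si \<le> 1" "1 / sj \<le> 1" "1 / si > 0" "1 / sj > 0" using si sj by auto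
  have "a\<^sup>2 \<le> c"
  proof (cases "a \<ge> 0")
    case True
    then have "a\<^sup>2 \<le> (1/sj)\<^sup>2" using n1 by (intro power_mono) auto
    also have "\<dots> \<le> 1/sj" using i1 mult_right_mono[of "1/sj" 1 "1/sj"] by (simp add: power2_eq_square)
    finally show ?thesis unfolding c_def using i1 by linarith
  next
    case False
    then have "a\<^sup>2 \<le> (1/si)\<^sup>2" using n2 power_mono[of "-a" "1/si" 2] by auto
    also have "\<dots> \<le> 1/si" using i1 mult_right_mono[of "1/si" 1 "1/si"] by (simp add: power2_eq_square)
    finally show ?thesis unfolding c_def using i1 by linarith
  qed
  then have "a\<^sup>2 / c \<le> 1" using c0 by simp
  moreover have "0 \<le> a\<^sup>2 / c" using c0 by simp
  ultimately have "(1 - 2 / al) * (a\<^sup>2 / c) \<le> 1" using al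
    by (smt (verit, ccfv_SIG) divide_nonneg_nonneg mult_le_one)
  then have h: "(1 - 2 / al) * (a\<^sup>2 / c) / (al * Dd) \<le> 1 / (al * Dd)"
    by (rule divide_right_mono) (use K in simp)
  have "(1 - 2 / al) * a\<^sup>2 / (al * Dd * c) = (1 - 2 / al) * (a\<^sup>2 / c) / (al * Dd)"
    by (simp add: divide_divide_eq_left mult.commute mult.left_commute)
  then show ?thesis unfolding c_def[symmetric] using h by linarith
qed

lemma pair_bound:
  fixes si sj al Dd li lj :: real
  assumes si: "si \<ge> 1" and sj: "sj \<ge> 1" and al: "al \<ge> 4" and D: "Dd \<ge> 1"
  defines "Fij \<equiv> (if li - lj > 1 / sj then (li - lj) / (al * Dd * (1 / si + 1 / sj)) else 0)"
  defines "Fji \<equiv> (if lj - li > 1 / si then (lj - li) / (al * Dd * (1 / sj + 1 / si)) else 0)"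
  shows "(2 * (li - lj) * Fij - Dd * Fij\<^sup>2 * (1 / si + 1 / sj) - Fij * (1 / si + 1 / sj))
       + (2 * (lj - li) * Fji - Dd * Fji\<^sup>2 * (1 / sj + 1 / si) - Fji * (1 / sj + 1 / si))
       - (1 - 2 / al) * (li - lj)\<^sup>2 / (al * Dd * (1 / si + 1 / sj)) \<ge> - 1 / (al * Dd)"
proof -
  have p1: "0 < 1 / si" "0 < 1 / sj" using si sj by auto
  consider (A) "li - lj > 1 / sj" | (B) "lj - li > 1 / si" | (C) "\<not> li - lj > 1 / sj" "\<not> lj - li > 1 / si"
    by blast
  then show ?thesis
  proof cases
    case A
    then have "\<not> lj - li > 1 / si" using p1 by linarith
    then have "Fji = 0" by (simp add: Fji_def)
    then show ?thesis using pair_case1[OF si sj al D A] A by (simp add: Fij_def)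
  next
    case B
    then have "\<not> li - lj > 1 / sj" using p1 by linarith
    then have "Fij = 0" by (simp add: Fij_def)
    moreover have "(li - lj)\<^sup>2 = (lj - li)\<^sup>2" by (simp add: power2_commute)
    ultimately show ?thesis using pair_case1[OF sj si al D B] B by (simp add: Fji_def add.commute)
  next
    case C
    then have "Fij = 0" "Fji = 0" by (simp_all add: Fij_def Fji_def)
    then show ?thesis using pair_case3[OF si sj al D, of "li - lj"] C by simp
  qed
qed



lemma swap2: "finite V \<Longrightarrow> (\<Sum>i\<in>V. \<Sum>j\<in>V. f i j) = (\<Sum>i\<in>V. \<Sum>j\<in>V. f j i)"
  by (rule sum.swap)

lemma sym_half: "finite V \<Longrightarrow> (\<Sum>i\<in>V. \<Sum>j\<in>V. (f i j :: real)) = (1/2) * (\<Sum>i\<in>V. \<Sum>j\<in>V. f i j + f j i)"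
  by (simp add: sum.distrib sum.swap[of f V V])

lemma det:
  fixes V :: "'v set" and E :: "'v \<Rightarrow> 'v \<Rightarrow> bool" and s l :: "'v \<Rightarrow> real" and al M :: real
    and D :: "'v \<Rightarrow> 'v \<Rightarrow> real" and dg :: "'v \<Rightarrow> nat"
  assumes fin: "finite V" and EV: "\<And>i j. E i j \<Longrightarrow> i \<in> V \<and> j \<in> V \<and> i \<noteq> j"
    and Esym: "\<And>i j. E i j \<Longrightarrow> E j i"
    and s1: "\<And>i. i \<in> V \<Longrightarrow> s i \<ge> 1" and al: "al \<ge> 4"
    and Dsym: "\<And>i j. D i j = D j i" and Ddg: "\<And>i j. E i j \<Longrightarrow> real (dg i) \<le> D i j"
    and dg: "\<And>i. dg i = card {j \<in> V. E i j}"
  defines "F \<equiv> \<lambda>i j. if E i j \<and> l i - l j > 1 / s j then (l i - l j) / (al * D i j * (1 / s i + 1 / s j)) else 0"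
  defines "Dl \<equiv> \<lambda>i. \<Sum>j\<in>V. F i j - F j i"
  shows "(\<Sum>i\<in>V. ((l i * s i - M * s i)\<^sup>2 - (l i * s i - Dl i - M * s i)\<^sup>2 - (\<Sum>j\<in>V. F i j + F j i)) / s i)
     \<ge> (1/2) * (\<Sum>i\<in>V. \<Sum>j\<in>V. if E i j then (1 - 2 / al) * (l i - l j)\<^sup>2 / (al * D i j * (1 / s i + 1 / s j)) else 0)
       - real (card V) / al"
proof -
  define H where "H i j = 2 * l i * (F i j - F j i) - 2 * M * (F i j - F j i) - D i j * (F i j)\<^sup>2 / s i
     - D i j * (F j i)\<^sup>2 / s i - F i j / s i - F j i / s i" for i j
  define Q where "Q i j = (if E i j then (1 - 2 / al) * (l i - l j)\<^sup>2 / (al * D i j * (1 / s i + 1 / s j)) else 0)" for i j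
  have spos: "s i > 0" if "i \<in> V" for i using s1[OF that] by simp
  have dg1: "real (dg i) \<ge> 1" if "E i j" for i j
  proof -
    have "j \<in> {j \<in> V. E i j}" using EV that by auto
    moreover have "finite {j \<in> V. E i j}" using fin by simp
    ultimately show ?thesis unfolding dg using card_gt_0_iff by (metis Suc_le_eq empty_iff of_nat_1 of_nat_le_iff One_nat_def)
  qed
  have D1: "D i j \<ge> 1" if "E i j" for i j using dg1[OF that] Ddg[OF that] by linarith
  have Fnn: "F i j \<ge> 0" for i j
  proof (cases "E i j \<and> l i - l j > 1 / s j")
    case True
    then have "s i \<ge> 1" "s j \<ge> 1" using EV s1 by auto
    then have "1 / s i + 1 / s j > 0" by (intro add_pos_pos) auto
    moreover have "l i - l j > 0" using True \<open>s j \<ge> 1\<close> by (smt (verit) divide_pos_pos)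
    ultimately show ?thesis using True D1[of i j] al unfolding F_def by simp
  qed (auto simp: F_def)
  have step1: "((l i * s i - M * s i)\<^sup>2 - (l i * s i - Dl i - M * s i)\<^sup>2 - (\<Sum>j\<in>V. F i j + F j i)) / s i
      \<ge> (\<Sum>j\<in>V. H i j)" if iV: "i \<in> V" for i
  proof -
    have si: "s i > 0" using spos iV .
    let ?N = "{j \<in> V. E i j}"
    have FN: "F i j - F j i = 0" if "j \<notin> ?N" for j using that Esym EV unfolding F_def by auto
    have "Dl i = (\<Sum>j\<in>?N. F i j - F j i)" unfolding Dl_def
      using fin FN by (intro sum.mono_neutral_right) auto
    then have "(Dl i)\<^sup>2 \<le> (\<Sum>j\<in>?N. (F i j - F j i)\<^sup>2) * real (card ?N)"
      using sum_squared_le_sum_of_squares by metis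
    also have "\<dots> = (\<Sum>j\<in>?N. real (dg i) * (F i j - F j i)\<^sup>2)" by (simp add: dg sum_distrib_left mult.commute)
    also have "\<dots> \<le> (\<Sum>j\<in>?N. D i j * ((F i j)\<^sup>2 + (F j i)\<^sup>2))"
    proof (intro sum_mono)
      fix j assume "j \<in> ?N"
      then have "E i j" by simp
      have "(F i j - F j i)\<^sup>2 \<le> (F i j)\<^sup>2 + (F j i)\<^sup>2"
        using Fnn[of i j] Fnn[of j i] by (simp add: power2_eq_square algebra_simps)
      moreover have "real (dg i) \<le> D i j" "0 \<le> real (dg i)" using Ddg[OF \<open>E i j\<close>] by auto
      ultimately show "real (dg i) * (F i j - F j i)\<^sup>2 \<le> D i j * ((F i j)\<^sup>2 + (F j i)\<^sup>2)"
        by (meson mult_mono zero_le_power2 add_nonneg_nonneg order.trans)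
    qed
    also have "\<dots> = (\<Sum>j\<in>V. D i j * ((F i j)\<^sup>2 + (F j i)\<^sup>2))"
    proof -
      have "F i j = 0 \<and> F j i = 0" if "j \<notin> ?N" for j using that Esym EV unfolding F_def by auto
      then show ?thesis using fin by (intro sum.mono_neutral_left) auto
    qed
    finally have cs: "(Dl i)\<^sup>2 / s i \<le> (\<Sum>j\<in>V. D i j * ((F i j)\<^sup>2 + (F j i)\<^sup>2)) / s i"
      using si by (simp add: divide_right_mono)
    have eq: "((l i * s i - M * s i)\<^sup>2 - (l i * s i - Dl i - M * s i)\<^sup>2 - (\<Sum>j\<in>V. F i j + F j i)) / s i
       = 2 * l i * Dl i - 2 * M * Dl i - (Dl i)\<^sup>2 / s i - (\<Sum>j\<in>V. F i j + F j i) / s i"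
      using si by (simp add: field_simps power2_eq_square)
    have eq2: "(\<Sum>j\<in>V. H i j) = 2 * l i * Dl i - 2 * M * Dl i - (\<Sum>j\<in>V. D i j * ((F i j)\<^sup>2 + (F j i)\<^sup>2)) / s i - (\<Sum>j\<in>V. F i j + F j i) / s i"
      unfolding H_def Dl_def
      by (simp add: sum.distrib sum_subtractf sum_distrib_left sum_divide_distrib algebra_simps add_divide_distrib diff_divide_distrib)
    show ?thesis unfolding eq eq2 using cs by linarith
  qed
  have step2: "H i j + H j i - Q i j \<ge> (if E i j then - 1 / (al * real (dg i)) else 0)" if "i \<in> V" "j \<in> V" for i j
  proof (cases "E i j")
    case True
    have sij: "s i \<ge> 1" "s j \<ge> 1" using that s1 by auto
    have "H i j + H j i - Q i j \<ge> - 1 / (al * D i j)"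
      using pair_bound[OF sij al D1[OF True], of "l i" "l j"] True Esym[OF True]
      unfolding H_def Q_def F_def Dsym[of j i]
      by (simp add: algebra_simps add_divide_distrib diff_divide_distrib)
    moreover have "- 1 / (al * D i j) \<ge> - 1 / (al * real (dg i))"
      using Ddg[OF True] dg1[OF True] al by (simp add: field_simps)
    ultimately show ?thesis using True by simp
  next
    case False
    then have "\<not> E j i" using Esym by blast
    then show ?thesis using False unfolding H_def Q_def F_def by simp
  qed
  have step3: "(\<Sum>j\<in>V. if E i j then - 1 / (al * real (dg i)) else 0) \<ge> - 1 / al" if "i \<in> V" for i
  proof -
    have "(\<Sum>j\<in>V. if E i j then - 1 / (al * real (dg i)) else 0) = real (dg i) * (- 1 / (al * real (dg i)))"
      using fin by (simp add: sum.If_cases dg Int_def conj_commute)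
    also have "\<dots> \<ge> - 1 / al" using al by (cases "dg i = 0") (auto simp: field_simps)
    finally show ?thesis .
  qed
  have "(\<Sum>i\<in>V. ((l i * s i - M * s i)\<^sup>2 - (l i * s i - Dl i - M * s i)\<^sup>2 - (\<Sum>j\<in>V. F i j + F j i)) / s i)
       \<ge> (\<Sum>i\<in>V. \<Sum>j\<in>V. H i j)" using step1 by (intro sum_mono) auto
  moreover have "(\<Sum>i\<in>V. \<Sum>j\<in>V. H i j) = (1/2) * (\<Sum>i\<in>V. \<Sum>j\<in>V. H i j + H j i)" using fin by (rule sym_half)
  moreover have "(\<Sum>i\<in>V. \<Sum>j\<in>V. H i j + H j i) \<ge> (\<Sum>i\<in>V. \<Sum>j\<in>V. Q i j + (if E i j then - 1 / (al * real (dg i)) else 0))"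
    using step2 by (intro sum_mono) (smt (verit))
  moreover have "(\<Sum>i\<in>V. \<Sum>j\<in>V. Q i j + (if E i j then - 1 / (al * real (dg i)) else 0))
     = (\<Sum>i\<in>V. \<Sum>j\<in>V. Q i j) + (\<Sum>i\<in>V. \<Sum>j\<in>V. (if E i j then - 1 / (al * real (dg i)) else 0))"
    by (simp add: sum.distrib)
  moreover have "(\<Sum>i\<in>V. \<Sum>j\<in>V. (if E i j then - 1 / (al * real (dg i)) else 0)) \<ge> (\<Sum>i\<in>V. - 1 / al)"
    using step3 by (intro sum_mono) auto
  moreover have "(\<Sum>i\<in>V. - 1 / al) = - real (card V) / al" by simp
  moreover have "real (card V) / al \<ge> 0" using al by simp
  ultimately show ?thesis unfolding Q_def by linarith
qed



lemma group_tasks: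
  assumes "finite V" "\<And>t. t < m \<Longrightarrow> x t \<in> V"
  shows "(\<Sum>t<m. g (x t)) = (\<Sum>k\<in>V. real (wload m x k) * (g k :: real))"
proof -
  have "(\<Sum>t<m. g (x t)) = (\<Sum>k\<in>V. \<Sum>t\<in>{t\<in>{..<m}. x t = k}. g (x t))"
    using assms by (intro sum.group[symmetric]) auto
  also have "\<dots> = (\<Sum>k\<in>V. real (wload m x k) * g k)"
  proof (intro sum.cong refl)
    fix k
    have "(\<Sum>t\<in>{t\<in>{..<m}. x t = k}. g (x t)) = (\<Sum>t\<in>{t\<in>{..<m}. x t = k}. g k)" by auto
    also have "{t\<in>{..<m}. x t = k} = {t. t < m \<and> x t = k}" by auto
    finally show "(\<Sum>t\<in>{t\<in>{..<m}. x t = k}. g (x t)) = real (wload m x k) * g k"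
      by (simp add: wload_def)
  qed
  finally show ?thesis .
qed

lemma pairset_sum:
  assumes "finite V"
  shows "(\<Sum>(i, j) \<in> {(i, j). i \<in> V \<and> j \<in> V \<and> E i j}. f i j) = (\<Sum>i\<in>V. \<Sum>j\<in>V. if E i j then f i j else (0::real))"
proof -
  have "{(i, j). i \<in> V \<and> j \<in> V \<and> E i j} = {p \<in> V \<times> V. E (fst p) (snd p)}" by auto
  then have "(\<Sum>(i, j) \<in> {(i, j). i \<in> V \<and> j \<in> V \<and> E i j}. f i j) = (\<Sum>p \<in> V \<times> V. if E (fst p) (snd p) then f (fst p) (snd p) else 0)"
    using assms by (simp add: sum.inter_filter[symmetric] case_prod_beta)
  also have "\<dots> = (\<Sum>i\<in>V. \<Sum>j\<in>V. if E i j then f i j else (0::real))"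
    by (simp add: sum.cartesian_product case_prod_beta)
  finally show ?thesis .
qed



theorem lemma12:
  fixes V :: "'v set" and E :: "'v \<Rightarrow> 'v \<Rightarrow> bool" and s :: "'v \<Rightarrow> real"
    and m :: nat and x :: "nat \<Rightarrow> 'v"
  assumes "finite V" and "V \<noteq> {}"
    and "\<And>i j. E i j \<Longrightarrow> i \<in> V \<and> j \<in> V \<and> i \<noteq> j"
    and "\<And>i j. E i j \<Longrightarrow> E j i"
    and "\<And>i. i \<in> V \<Longrightarrow> s i > 0"
    and "Min (s ` V) = 1"
    and "\<And>t. t < m \<Longrightarrow> x t \<in> V"
  shows "measure_pmf.expectation (round_pmf V E s m x) (\<lambda>y. Psi0 V s m x - Psi0 V s m y)
         \<ge> (1 / 2) * (\<Sum>(i, j) \<in> {(i, j). i \<in> V \<and> j \<in> V \<and> E i j}.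
                (1 - 2 / alpha V s) * (lload s m x i - lload s m x j)\<^sup>2 /
                (alpha V s * real (dmax V E i j) * (1 / s i + 1 / s j)))
           - real (card V) / alpha V s"
proof -
  note fin = assms(1) and EV = assms(3) and Esym = assms(4) and spos = assms(5) and xV = assms(7)
  let ?Q = "task_move V E s m x"
  let ?P = "round_pmf V E s m x"
  let ?F = "Fl V E s m x"
  define w where "w i = real (wload m x i)" for i
  define l where "l = lload s m x"
  define M where "M = real m / Ssum V s"
  define b where "b i = M * s i" for i
  define r where "r k j = pmf (?Q k) j" for k j
  define Dl where "Dl i = (\<Sum>j\<in>V. ?F i j - ?F j i)" for i
  have s1: "s i \<ge> 1" if "i \<in> V" for i
    using assms(6) Min_le[of "s ` V" "s i"] fin that by auto
  have al: "alpha V s \<ge> 4"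
  proof -
    obtain i where "i \<in> V" using assms(2) by blast
    then have "s i \<le> smax V s" unfolding smax_def using fin by auto
    then show ?thesis using s1[OF \<open>i \<in> V\<close>] by (simp add: alpha_def)
  qed
  have finQ: "finite (set_pmf (?Q k))" for k
    using tm_set[OF fin, of E s m x k] finite_subset[OF nbrs_sub[of V E k] fin]
    by (meson finite_insert finite_subset)
  have QV: "set_pmf (?Q k) \<subseteq> V" if "k \<in> V" for k
    using tm_set[OF fin, of E s m x k] nbrs_sub[of V E k] that by auto
  have rsum: "(\<Sum>j\<in>V. r k j) = 1" if "k \<in> V" for k
    unfolding r_def by (rule sum_pmf_eq_1[OF fin QV[OF that]])
  have rF: "w k * r k j = ?F k j" if "k \<in> V" "j \<noteq> k" for k j
    unfolding w_def r_def using tm_pmf[OF fin EV spos _ that] al by simp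
  have Fii: "?F i i = 0" for i using EV by (auto simp: Fl_def)
  have r01: "0 \<le> r k j" "r k j \<le> 1" for k j unfolding r_def by (auto simp: pmf_le_1)
  have P_def: "?P = Pi_pmf {..<m} undefined (\<lambda>t. ?Q (x t))" by (simp add: round_pmf_def)
  have finP: "finite (set_pmf ?P)" unfolding P_def by (rule fin_Pi_pmf) (auto intro: finQ)
  have int: "integrable (measure_pmf ?P) f" for f :: "_ \<Rightarrow> real" using finP by (rule integrable_measure_pmf_finite)
  have Psi_y: "Psi0 V s m y = (\<Sum>i\<in>V. (real (card {t\<in>{..<m}. y t = i}) - b i)\<^sup>2 / s i)" for y
  proof -
    have "{t. t < m \<and> y t = i} = {t\<in>{..<m}. y t = i}" for i by auto
    then show ?thesis unfolding Psi0_def wload_def b_def M_def by simp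
  qed
  have Psi_x: "Psi0 V s m x = (\<Sum>i\<in>V. (w i - b i)\<^sup>2 / s i)"
    unfolding Psi0_def w_def b_def M_def by simp
  define mu where "mu i = (\<Sum>t<m. r (x t) i)" for i
  define Var where "Var i = (\<Sum>t<m. r (x t) i * (1 - r (x t) i))" for i
  have Ei: "measure_pmf.expectation ?P (\<lambda>y. (real (card {t\<in>{..<m}. y t = i}) - b i)\<^sup>2) = (mu i - b i)\<^sup>2 + Var i" for i
    unfolding P_def mu_def Var_def r_def by (rule exp_count_sq) (auto intro: finQ)
  have Eexp: "measure_pmf.expectation ?P (\<lambda>y. Psi0 V s m x - Psi0 V s m y)
      = (\<Sum>i\<in>V. ((w i - b i)\<^sup>2 - ((mu i - b i)\<^sup>2 + Var i)) / s i)"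
  proof -
    have "measure_pmf.expectation ?P (\<lambda>y. Psi0 V s m x - Psi0 V s m y)
       = Psi0 V s m x - (\<Sum>i\<in>V. measure_pmf.expectation ?P (\<lambda>y. (real (card {t\<in>{..<m}. y t = i}) - b i)\<^sup>2) / s i)"
      unfolding Psi_y[of _] by (simp add: int Bochner_Integration.integral_sum)
    also have "\<dots> = (\<Sum>i\<in>V. ((w i - b i)\<^sup>2 - ((mu i - b i)\<^sup>2 + Var i)) / s i)"
      unfolding Ei Psi_x by (simp add: sum_subtractf diff_divide_distrib)
    finally show ?thesis .
  qed
  have mu_eq: "mu i = w i - Dl i" if iV: "i \<in> V" for i
  proof -
    have "mu i = (\<Sum>k\<in>V. w k * r k i)" unfolding mu_def w_def by (rule group_tasks[OF fin xV])
    also have "\<dots> = w i * r i i + (\<Sum>k\<in>V - {i}. w k * r k i)" using fin iV by (simp add: sum.remove)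
    also have "(\<Sum>k\<in>V - {i}. w k * r k i) = (\<Sum>k\<in>V - {i}. ?F k i)" using rF by (intro sum.cong) auto
    also have "\<dots> = (\<Sum>k\<in>V. ?F k i)" using fin iV Fii by (simp add: sum.remove)
    also have "r i i = 1 - (\<Sum>j\<in>V - {i}. r i j)" using rsum[OF iV] fin iV by (simp add: sum.remove)
    also have "w i * (1 - (\<Sum>j\<in>V - {i}. r i j)) = w i - (\<Sum>j\<in>V - {i}. ?F i j)"
      using rF iV by (simp add: right_diff_distrib sum_distrib_left)
    also have "(\<Sum>j\<in>V - {i}. ?F i j) = (\<Sum>j\<in>V. ?F i j)" using fin iV Fii by (simp add: sum.remove)
    finally show ?thesis unfolding Dl_def by (simp add: sum_subtractf)
  qed
  have Var_le: "Var i \<le> (\<Sum>j\<in>V. ?F i j + ?F j i)" if iV: "i \<in> V" for i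
  proof -
    have wnn: "w k \<ge> 0" for k by (simp add: w_def)
    have "Var i = (\<Sum>k\<in>V. w k * (r k i * (1 - r k i)))" unfolding Var_def w_def by (rule group_tasks[OF fin xV])
    also have "\<dots> = w i * (r i i * (1 - r i i)) + (\<Sum>k\<in>V - {i}. w k * (r k i * (1 - r k i)))"
      using fin iV by (simp add: sum.remove)
    also have "\<dots> \<le> w i * (1 - r i i) + (\<Sum>k\<in>V - {i}. w k * r k i)"
    proof (intro add_mono sum_mono mult_left_mono wnn)
      show "r i i * (1 - r i i) \<le> 1 - r i i" using r01[of i i] mult_right_mono[of "r i i" 1 "1 - r i i"] by simp
      fix k show "r k i * (1 - r k i) \<le> r k i" using r01[of k i] mult_left_mono[of "1 - r k i" 1 "r k i"] by simp
    qed
    also have "(\<Sum>k\<in>V - {i}. w k * r k i) = (\<Sum>k\<in>V - {i}. ?F k i)" using rF by (intro sum.cong) auto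
    also have "\<dots> = (\<Sum>k\<in>V. ?F k i)" using fin iV Fii by (simp add: sum.remove)
    also have "1 - r i i = (\<Sum>j\<in>V - {i}. r i j)" using rsum[OF iV] fin iV by (simp add: sum.remove)
    also have "w i * (\<Sum>j\<in>V - {i}. r i j) = (\<Sum>j\<in>V - {i}. ?F i j)"
      unfolding sum_distrib_left using rF iV by (intro sum.cong) auto
    also have "\<dots> = (\<Sum>j\<in>V. ?F i j)" using fin iV Fii by (simp add: sum.remove)
    finally show ?thesis by (simp add: sum.distrib)
  qed
  have "measure_pmf.expectation ?P (\<lambda>y. Psi0 V s m x - Psi0 V s m y)
     \<ge> (\<Sum>i\<in>V. ((l i * s i - M * s i)\<^sup>2 - (l i * s i - Dl i - M * s i)\<^sup>2 - (\<Sum>j\<in>V. ?F i j + ?F j i)) / s i)"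
    unfolding Eexp
  proof (intro sum_mono divide_right_mono)
    fix i assume iV: "i \<in> V"
    have "l i * s i = w i" using spos[OF iV] by (simp add: l_def lload_def w_def)
    then show "(l i * s i - M * s i)\<^sup>2 - (l i * s i - Dl i - M * s i)\<^sup>2 - (\<Sum>j\<in>V. ?F i j + ?F j i)
        \<le> (w i - b i)\<^sup>2 - ((mu i - b i)\<^sup>2 + Var i)"
      using mu_eq[OF iV] Var_le[OF iV] unfolding b_def by simp
    show "0 \<le> s i" using spos[OF iV] by simp
  qed
  also have "(\<Sum>i\<in>V. ((l i * s i - M * s i)\<^sup>2 - (l i * s i - Dl i - M * s i)\<^sup>2 - (\<Sum>j\<in>V. ?F i j + ?F j i)) / s i)
     \<ge> (1/2) * (\<Sum>i\<in>V. \<Sum>j\<in>V. if E i j then (1 - 2 / alpha V s) * (l i - l j)\<^sup>2 / (alpha V s * real (dmax V E i j) * (1 / s i + 1 / s j)) else 0)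
       - real (card V) / alpha V s"
  proof -
    have d1: "\<And>i j. real (dmax V E i j) = real (dmax V E j i)" by (simp add: dmax_def max.commute)
    have d2: "\<And>i j. E i j \<Longrightarrow> real (deg V E i) \<le> real (dmax V E i j)" by (simp add: dmax_def)
    have d3: "\<And>i. deg V E i = card {j \<in> V. E i j}" by (simp add: deg_def nbrs_def)
    show ?thesis
      using det[where V=V and E=E and s=s and al="alpha V s" and D = "\<lambda>i j. real (dmax V E i j)" and dg = "deg V E"
          and l = "lload s m x" and M = M, OF fin EV Esym s1 al d1 d2 d3]
      unfolding Dl_def l_def Fl_def by simp
  qed
  finally show ?thesis unfolding pairset_sum[OF fin] l_def .
qed


end
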